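(* Let $\Gamma\subseteq[0,1]$ be a set which satisfies the DCC. Then there exist real numbers $\epsilon,\delta\in(0,1]$ such that $$\{\textstyle\sum_i n_ib_i'-1>0\mid b_i'\in\Gamma_\epsilon\cap[0,1],\ n_i\in\mathbb{Z}_{\ge0}\}\subseteq[\delta,+\infty),$$ where $\Gamma_\epsilon:=\bigcup_{b\in\Gamma}[b-\epsilon,b]$.
   Context: A set $\Gamma\subseteq\mathbb{R}$ satisfies the descending chain condition (DCC) if every non-increasing sequence in $\Gamma$ stabilizes. Sums $\sum_i n_ib_i'$ are finite sums. *)

theory Defs
  imports Complex_Main
begin

definition dcc :: "real set \<Rightarrow> bool" where
  "dcc \<Gamma> \<longleftrightarrow> (\<forall>a :: nat \<Rightarrow> real. (\<forall>i. a i \<in> \<Gamma>) \<longrightarrow> (\<forall>i. a (Suc i) \<le> a i)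
      \<longrightarrow> (\<exists>N. \<forall>m\<ge>N. a m = a N))"

definition Gamma_eps :: "real set \<Rightarrow> real \<Rightarrow> real set" where
  "Gamma_eps \<Gamma> \<epsilon> = (\<Union>b\<in>\<Gamma>. {b - \<epsilon>..b})"

end

theory Submission imports Defs begin

lemma dcc_subset: "dcc B \<Longrightarrow> A \<subseteq> B \<Longrightarrow> dcc A"
  unfolding dcc_def by blast

lemma dcc_insert0:
  assumes "\<forall>x\<in>G. 0 \<le> x" "dcc G"
  shows "dcc (insert 0 G)"
  unfolding dcc_def
proof (intro allI impI)
  fix a :: "nat \<Rightarrow> real"
  assume A: "\<forall>i. a i \<in> insert 0 G" and D: "\<forall>i. a (Suc i) \<le> a i"
  have dec: "decseq a" using D by (intro decseq_SucI) auto
  show "\<exists>N. \<forall>m\<ge>N. a m = a N"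
  proof (cases "\<exists>i. a i = 0")
    case True
    then obtain i where "a i = 0" by blast
    have "\<forall>m\<ge>i. a m = a i"
    proof (intro allI impI)
      fix m assume "i \<le> m"
      hence "a m \<le> a i" using decseqD[OF dec] by blast
      moreover have "0 \<le> a m" using A assms(1) by (cases "a m = 0") auto
      ultimately show "a m = a i" using \<open>a i = 0\<close> by linarith
    qed
    thus ?thesis by blast
  next
    case False
    hence "\<forall>i. a i \<in> G" using A by blast
    thus ?thesis using assms(2) D unfolding dcc_def by blast
  qed
qed

lemma dcc_gap:
  assumes "dcc S"
  shows "\<exists>\<delta>>0. \<forall>s\<in>S. t < s \<longrightarrow> t + \<delta> \<le> s"
proof (rule ccontr)
  assume "\<not> ?thesis"
  hence H0: "\<forall>\<delta>>0. \<exists>s\<in>S. t < s \<and> s < t + \<delta>" by (simp add: not_le)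
  have H: "\<forall>x>t. \<exists>s\<in>S. t < s \<and> s < x"
  proof (intro allI impI)
    fix x :: real assume "t < x"
    then obtain s where "s \<in> S" "t < s" "s < t + (x - t)" using H0[rule_format, of "x - t"] by auto
    thus "\<exists>s\<in>S. t < s \<and> s < x" by auto
  qed
  hence "\<forall>x. \<exists>y. x > t \<longrightarrow> y \<in> S \<and> t < y \<and> y < x" by blast
  hence "\<exists>f. \<forall>x. x > t \<longrightarrow> f x \<in> S \<and> t < f x \<and> f x < x" by (rule choice)
  then obtain f where f0: "\<forall>x. x > t \<longrightarrow> f x \<in> S \<and> t < f x \<and> f x < x" by blast
  have f: "f x \<in> S \<and> t < f x \<and> f x < x" if "x > t" for x using f0 that by blast
  define a where "a = rec_nat (f (t+1)) (\<lambda>_ y. f y)"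
  have a0: "a 0 = f (t+1)" and aS: "\<And>n. a (Suc n) = f (a n)" by (simp_all add: a_def)
  have P: "a n \<in> S \<and> t < a n" for n
  proof (induction n)
    case 0
    have "t < t + 1" by simp
    from f[OF this] show ?case unfolding a0 by blast
  next
    case (Suc n)
    hence "t < a n" by blast
    from f[OF this] show ?case unfolding aS by blast
  qed
  have L: "a (Suc n) < a n" for n using P[of n] f[of "a n"] aS[of n] by simp
  have "\<forall>i. a i \<in> S" using P by blast
  moreover have "\<forall>i. a (Suc i) \<le> a i" using L less_imp_le by blast
  ultimately have "\<exists>N. \<forall>m\<ge>N. a m = a N" using assms unfolding dcc_def by blast
  then obtain N where "\<forall>m\<ge>N. a m = a N" by blast
  hence "a (Suc N) = a N" using le_SucI[OF order_refl] by blast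
  with L[of N] show False by simp
qed

lemma dcc_stab_sub:
  fixes s :: "nat \<Rightarrow> real" and r :: "nat \<Rightarrow> nat"
  assumes "decseq s" "strict_mono r" "\<forall>j\<ge>J. s (r j) = s (r J)"
  shows "\<exists>N. \<forall>m\<ge>N. s m = s N"
proof (intro exI allI impI)
  fix m assume "r J \<le> m"
  hence 1: "s m \<le> s (r J)" using decseqD[OF assms(1)] by blast
  have "m \<le> r (max J m)" using strict_mono_imp_increasing[OF assms(2), of "max J m"] by linarith
  hence "s (r (max J m)) \<le> s m" using decseqD[OF assms(1)] by blast
  moreover have "s (r (max J m)) = s (r J)" using assms(3) max.cobounded1 by blast
  ultimately show "s m = s (r J)" using 1 by linarith
qed

lemma dcc_mono_ev:
  assumes "dcc A" "\<forall>i. x i \<in> A" "monoseq x"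
  shows "\<exists>N. \<forall>i j. N \<le> i \<longrightarrow> i \<le> j \<longrightarrow> x i \<le> x j"
  using assms(3) unfolding monoseq_def
proof
  assume "\<forall>m. \<forall>n\<ge>m. x m \<le> x n" thus ?thesis by blast
next
  assume H: "\<forall>m. \<forall>n\<ge>m. x n \<le> x m"
  have "\<forall>i. x (Suc i) \<le> x i" using H by simp
  then obtain N where NN: "\<forall>m\<ge>N. x m = x N" using assms(1,2) unfolding dcc_def by blast
  show ?thesis
  proof (intro exI allI impI)
    fix i j assume "N \<le> i" "i \<le> j"
    hence "x i = x N" "x j = x N" using NN by (meson order_trans)+
    thus "x i \<le> x j" by simp
  qed
qed

lemma dcc_plus:
  assumes "dcc A" "dcc B"
  shows "dcc {a + b | a b. a \<in> A \<and> b \<in> B}"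
  unfolding dcc_def
proof (intro allI impI)
  fix s :: "nat \<Rightarrow> real"
  assume S: "\<forall>i. s i \<in> {a + b | a b. a \<in> A \<and> b \<in> B}" and D: "\<forall>i. s (Suc i) \<le> s i"
  have dec: "decseq s" using D by (intro decseq_SucI) auto
  have "\<forall>i. \<exists>p. fst p \<in> A \<and> snd p \<in> B \<and> s i = fst p + snd p"
  proof
    fix i
    from S obtain x y where "x \<in> A" "y \<in> B" "s i = x + y" by blast
    thus "\<exists>p. fst p \<in> A \<and> snd p \<in> B \<and> s i = fst p + snd p" by (intro exI[of _ "(x,y)"]) simp
  qed
  hence "\<exists>p. \<forall>i. fst (p i) \<in> A \<and> snd (p i) \<in> B \<and> s i = fst (p i) + snd (p i)" by (rule choice)
  then obtain p where p: "\<forall>i. fst (p i) \<in> A \<and> snd (p i) \<in> B \<and> s i = fst (p i) + snd (p i)"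
    by blast
  define a where "a i = fst (p i)" for i
  define b where "b i = snd (p i)" for i
  have ab: "a i \<in> A" "b i \<in> B" "s i = a i + b i" for i using p by (simp_all add: a_def b_def)
  obtain r1 where r1: "strict_mono r1" "monoseq (\<lambda>n. a (r1 n))" using seq_monosub[of a] by blast
  obtain r2 where r2: "strict_mono r2" "monoseq (\<lambda>n. b (r1 (r2 n)))" using seq_monosub[of "\<lambda>n. b (r1 n)"] by blast
  obtain N1 where N1: "\<forall>i j. N1 \<le> i \<longrightarrow> i \<le> j \<longrightarrow> a (r1 i) \<le> a (r1 j)"
  proof -
    have "\<forall>i. a (r1 i) \<in> A" using ab(1) by blast
    from dcc_mono_ev[OF assms(1) this r1(2)] show ?thesis using that by blast
  qed
  obtain N2 where N2: "\<forall>i j. N2 \<le> i \<longrightarrow> i \<le> j \<longrightarrow> b (r1 (r2 i)) \<le> b (r1 (r2 j))"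
  proof -
    have "\<forall>i. b (r1 (r2 i)) \<in> B" using ab(2) by blast
    from dcc_mono_ev[OF assms(2) this r2(2)] show ?thesis using that by blast
  qed
  define r where "r = r1 \<circ> r2"
  have r: "strict_mono r" unfolding r_def using r1(1) r2(1) by (rule strict_mono_o)
  define N where "N = max N1 N2"
  have "\<forall>j\<ge>N. s (r j) = s (r N)"
  proof (intro allI impI)
    fix j assume "N \<le> j"
    have "N1 \<le> r2 N" using strict_mono_imp_increasing[OF r2(1), of N] N_def by linarith
    moreover have "r2 N \<le> r2 j" using r2(1) \<open>N \<le> j\<close> by (simp add: strict_mono_less_eq)
    ultimately have 1: "a (r N) \<le> a (r j)" using N1 by (simp add: r_def)
    have 2: "b (r N) \<le> b (r j)" using N2 N_def \<open>N \<le> j\<close> by (simp add: r_def)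
    have "r N \<le> r j" using r \<open>N \<le> j\<close> by (simp add: strict_mono_less_eq)
    hence 3: "s (r j) \<le> s (r N)" by (rule decseqD[OF dec])
    show "s (r j) = s (r N)" using 1 2 3 ab(3)[of "r j"] ab(3)[of "r N"] by linarith
  qed
  thus "\<exists>N. \<forall>m\<ge>N. s m = s N" by (rule dcc_stab_sub[OF dec r])
qed

definition gsums :: "real set \<Rightarrow> nat \<Rightarrow> real set" where
  "gsums G M = {(\<Sum>j<M. c j) | c. \<forall>j<M. c j \<in> insert 0 G}"

lemma sums_0: "gsums G 0 = {0}" unfolding gsums_def by auto

lemma sums_Suc: "gsums G (Suc M) \<subseteq> {a + b | a b. a \<in> insert 0 G \<and> b \<in> gsums G M}"
proof (rule subsetI)
  fix x assume "x \<in> gsums G (Suc M)"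
  then obtain c where c: "x = (\<Sum>j<Suc M. c j)" "\<forall>j<Suc M. c j \<in> insert 0 G" unfolding gsums_def by blast
  have 1: "x = c M + (\<Sum>j<M. c j)" using c(1) by simp
  have 2: "c M \<in> insert 0 G" using c(2) by simp
  have "\<forall>j<M. c j \<in> insert 0 G" using c(2) by simp
  hence 3: "(\<Sum>j<M. c j) \<in> gsums G M" unfolding gsums_def by blast
  show "x \<in> {a + b | a b. a \<in> insert 0 G \<and> b \<in> gsums G M}" using 1 2 3 by blast
qed

lemma dcc_sums:
  assumes "\<forall>x\<in>G. 0 \<le> x" "dcc G"
  shows "dcc (gsums G M)"
proof (induction M)
  case 0
  show ?case unfolding sums_0 dcc_def by auto
next
  case (Suc M)
  show ?case by (rule dcc_subset[OF dcc_plus[OF dcc_insert0[OF assms] Suc] sums_Suc])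
qed

lemma sums_add: "s \<in> gsums G m \<Longrightarrow> x \<in> insert 0 G \<Longrightarrow> s + x \<in> gsums G (Suc m)"
proof -
  assume "s \<in> gsums G m" "x \<in> insert 0 G"
  then obtain c where c: "s = (\<Sum>j<m. c j)" "\<forall>j<m. c j \<in> insert 0 G" unfolding gsums_def by blast
  have "s + x = (\<Sum>j<Suc m. (c(m:=x)) j)" using c by simp
  moreover have "\<forall>j<Suc m. (c(m:=x)) j \<in> insert 0 G" using c \<open>x \<in> _\<close> by (simp add: less_Suc_eq)
  ultimately show ?thesis unfolding gsums_def by blast
qed

lemma sums_addn: "s \<in> gsums G m \<Longrightarrow> x \<in> insert 0 G \<Longrightarrow> s + real n * x \<in> gsums G (m + n)"
proof (induction n)
  case 0 thus ?case by simp
next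
  case (Suc n)
  have "s + real n * x + x \<in> gsums G (Suc (m + n))" using Suc by (intro sums_add) auto
  thus ?case by (simp add: algebra_simps)
qed

lemma sums_mono: "s \<in> gsums G m \<Longrightarrow> m \<le> M \<Longrightarrow> s \<in> gsums G M"
  using sums_addn[of s G m 0 "M - m"] by simp

lemma sums_lin:
  fixes k :: nat and m :: "nat \<Rightarrow> nat" and c :: "nat \<Rightarrow> real"
  shows "(\<forall>i<k. c i \<in> insert 0 G) \<Longrightarrow> (\<Sum>i<k. real (m i) * c i) \<in> gsums G (\<Sum>i<k. m i)"
proof (induction k)
  case 0 thus ?case by (simp add: sums_0)
next
  case (Suc k)
  thus ?case using sums_addn[of _ G _ "c k" "m k"] by simp
qed


theorem lemma3p4:
  fixes \<Gamma> :: "real set"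
  assumes "\<Gamma> \<subseteq> {0..1}" and "dcc \<Gamma>"
  shows "\<exists>\<epsilon> \<delta>. \<epsilon> \<in> {0<..1} \<and> \<delta> \<in> {0<..1} \<and>
    (\<forall>(k::nat) (b :: nat \<Rightarrow> real) (n :: nat \<Rightarrow> nat).
       (\<forall>i<k. b i \<in> Gamma_eps \<Gamma> \<epsilon> \<inter> {0..1}) \<longrightarrow>
       (\<Sum>i<k. real (n i) * b i) - 1 > 0 \<longrightarrow>
       (\<Sum>i<k. real (n i) * b i) - 1 \<in> {\<delta>..})"
proof -
  have nn: "\<forall>x\<in>\<Gamma>. 0 \<le> x" using assms(1) by auto
  obtain g0 where g0: "g0 > 0" "\<forall>x\<in>\<Gamma>. 0 < x \<longrightarrow> 0 + g0 \<le> x"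
    using dcc_gap[OF assms(2), of 0] by blast
  define g where "g = min g0 1"
  have g: "0 < g" "g \<le> 1" "\<And>x. x \<in> \<Gamma> \<Longrightarrow> 0 < x \<Longrightarrow> g \<le> x"
    using g0 unfolding g_def by auto
  define M :: nat where "M = nat \<lceil>4 / g\<rceil>"
  have "4 \<le> 4 / g" using g by (simp add: field_simps)
  hence M4: "4 / g \<le> real M" and Mpos: "real M \<ge> 4" unfolding M_def by linarith+
  obtain d0 where d0: "d0 > 0" "\<forall>s\<in>gsums \<Gamma> M. 1 < s \<longrightarrow> 1 + d0 \<le> s"
    using dcc_gap[OF dcc_sums[OF nn assms(2), of M], of 1] by blast
  define \<epsilon> where "\<epsilon> = min (g / 2) (d0 / (2 * real M))"
  define \<delta> where "\<delta> = min 1 (d0 / 2)"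
  have epos: "0 < \<epsilon>" "\<epsilon> \<le> g / 2" "\<epsilon> \<le> d0 / (2 * real M)"
    unfolding \<epsilon>_def using g d0 Mpos by auto
  have eM: "real M * \<epsilon> \<le> d0 / 2"
  proof -
    have "real M * \<epsilon> \<le> real M * (d0 / (2 * real M))" using epos Mpos by (intro mult_left_mono) auto
    also have "\<dots> = d0 / 2" using Mpos by (simp add: field_simps)
    finally show ?thesis .
  qed
  show ?thesis
  proof (intro exI conjI allI impI)
    show "\<epsilon> \<in> {0<..1}" using epos g by auto
    show "\<delta> \<in> {0<..1}" using d0 unfolding \<delta>_def by auto
    fix k :: nat and b :: "nat \<Rightarrow> real" and n :: "nat \<Rightarrow> nat"
    assume hb: "\<forall>i<k. b i \<in> Gamma_eps \<Gamma> \<epsilon> \<inter> {0..1}"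
      and hs: "(\<Sum>i<k. real (n i) * b i) - 1 > 0"
    define S where "S = (\<Sum>i<k. real (n i) * b i)"
    show "S - 1 \<in> {\<delta>..}"
    proof (cases "S \<ge> 2")
      case True thus ?thesis unfolding \<delta>_def by auto
    next
      case False
      have "\<forall>i. \<exists>c. i < k \<longrightarrow> c \<in> \<Gamma> \<and> c - \<epsilon> \<le> b i \<and> b i \<le> c"
        using hb unfolding Gamma_eps_def by auto
      hence "\<exists>c. \<forall>i. i < k \<longrightarrow> c i \<in> \<Gamma> \<and> c i - \<epsilon> \<le> b i \<and> b i \<le> c i" by (rule choice)
      then obtain c where c: "\<And>i. i < k \<Longrightarrow> c i \<in> \<Gamma> \<and> c i - \<epsilon> \<le> b i \<and> b i \<le> c i" by blast
      have b01: "0 \<le> b i" "b i \<le> 1" if "i < k" for i using hb that by auto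
      define m where "m i = (if b i = 0 then 0 else n i)" for i
      define d where "d i = (if b i = 0 then 0 else c i)" for i
      have e1: "real (n i) * b i = real (m i) * b i" for i unfolding m_def by auto
      have e2: "real (m i) * (g / 2) \<le> real (m i) * b i" if "i < k" for i
      proof (cases "b i = 0")
        case True thus ?thesis unfolding m_def by simp
      next
        case False
        have "0 < b i" using b01[OF that] False by auto
        hence "0 < c i" using c[OF that] by auto
        hence "g \<le> c i" using g(3) c[OF that] by auto
        hence "g / 2 \<le> b i" using c[OF that] epos by auto
        thus ?thesis by (intro mult_left_mono) auto
      qed
      have e3: "real (m i) * b i \<le> real (m i) * d i" if "i < k" for i
        unfolding d_def using c[OF that] by (auto intro: mult_left_mono)
      have e4: "real (m i) * d i - real (m i) * b i \<le> real (m i) * \<epsilon>" if "i < k" for i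
      proof -
        have "d i - b i \<le> \<epsilon>" unfolding d_def using c[OF that] epos by auto
        hence "real (m i) * (d i - b i) \<le> real (m i) * \<epsilon>" by (intro mult_left_mono) auto
        thus ?thesis by (simp add: algebra_simps)
      qed
      have e5: "\<forall>i<k. d i \<in> insert 0 \<Gamma>" unfolding d_def using c by auto
      have Sm: "S = (\<Sum>i<k. real (m i) * b i)" unfolding S_def by (rule sum.cong[OF refl e1])
      have "(g / 2) * real (\<Sum>i<k. m i) = (\<Sum>i<k. real (m i) * (g / 2))"
        by (simp add: sum_distrib_left mult.commute)
      also have "\<dots> \<le> S" unfolding Sm using e2 by (intro sum_mono) auto
      also have "\<dots> < 2" using False by simp
      finally have "(g / 2) * real (\<Sum>i<k. m i) < 2" .
      hence "real (\<Sum>i<k. m i) < 4 / g" using g by (simp add: field_simps)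
      hence summ: "(\<Sum>i<k. m i) \<le> M" using M4 by linarith
      define T where "T = (\<Sum>i<k. real (m i) * d i)"
      have "T \<in> gsums \<Gamma> (\<Sum>i<k. m i)" unfolding T_def by (rule sums_lin[OF e5])
      hence TS: "T \<in> gsums \<Gamma> M" using summ by (rule sums_mono)
      have "S \<le> T" unfolding Sm T_def using e3 by (intro sum_mono) auto
      hence "1 < T" using hs S_def by simp
      hence T1: "1 + d0 \<le> T" using d0 TS by blast
      have "T - S = (\<Sum>i<k. real (m i) * d i - real (m i) * b i)"
        unfolding T_def Sm by (simp add: sum_subtractf)
      also have "\<dots> \<le> (\<Sum>i<k. real (m i) * \<epsilon>)" using e4 by (intro sum_mono) auto
      also have "\<dots> = real (\<Sum>i<k. m i) * \<epsilon>" by (simp add: sum_distrib_right)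
      also have "\<dots> \<le> real M * \<epsilon>" using summ epos by (intro mult_right_mono) (simp_all only: of_nat_le_iff less_imp_le)
      also have "\<dots> \<le> d0 / 2" by (rule eM)
      finally have "T - S \<le> d0 / 2" .
      hence "1 + d0 / 2 \<le> S" using T1 by linarith
      thus ?thesis unfolding \<delta>_def by auto
    qed
  qed
qed

end
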